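(* Let $k\geq 2$ and let $G$ be a graph of order $n\geq 11k-4$ that does not contain $k\cdot P_3$ as a subgraph. Then $\lambda_n(G)\geq -\sqrt{(k-1)(n-k+1)}$, with equality if and only if $G=K_{k-1,n-k+1}$.
   Context: Graphs are finite and simple; $\lambda_n(G)$ denotes the least eigenvalue of the adjacency matrix of $G$. $P_3$ is the path on 3 vertices and $k\cdot P_3$ is the disjoint union of $k$ copies of $P_3$. $K_{a,b}$ is the complete bipartite graph with parts of sizes $a$ and $b$. *)

theory Defs
  imports "HOL-Analysis.Analysis"
begin

definition simple_graph :: "('a \<Rightarrow> 'a \<Rightarrow> bool) \<Rightarrow> bool" where
  "simple_graph E \<longleftrightarrow> (\<forall>x y. E x y \<longrightarrow> E y x) \<and> (\<forall>x. \<not> E x x)"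

definition adj_matrix :: "('a::finite \<Rightarrow> 'a \<Rightarrow> bool) \<Rightarrow> real^'a^'a" where
  "adj_matrix E = (\<chi> i j. if E i j then 1 else 0)"

definition is_eigenvalue :: "real^'n^'n \<Rightarrow> real \<Rightarrow> bool" where
  "is_eigenvalue A \<mu> \<longleftrightarrow> (\<exists>v. v \<noteq> 0 \<and> A *v v = \<mu> *\<^sub>R v)"

definition least_eig :: "('a::finite \<Rightarrow> 'a \<Rightarrow> bool) \<Rightarrow> real" where
  "least_eig E = Min {\<mu>. is_eigenvalue (adj_matrix E) \<mu>}"

definition contains_kP3 :: "('a \<Rightarrow> 'a \<Rightarrow> bool) \<Rightarrow> nat \<Rightarrow> bool" where
  "contains_kP3 E k \<longleftrightarrow> (\<exists>f :: nat \<times> nat \<Rightarrow> 'a.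
     inj_on f ({0..<k} \<times> {0..<3}) \<and>
     (\<forall>i<k. E (f (i,0)) (f (i,1)) \<and> E (f (i,1)) (f (i,2))))"

definition Kab_edge :: "nat \<Rightarrow> nat \<Rightarrow> nat \<Rightarrow> nat \<Rightarrow> bool" where
  "Kab_edge a b x y \<longleftrightarrow> x < a + b \<and> y < a + b \<and> ((x < a) \<noteq> (y < a))"

definition is_Kab :: "('a \<Rightarrow> 'a \<Rightarrow> bool) \<Rightarrow> nat \<Rightarrow> nat \<Rightarrow> bool" where
  "is_Kab E a b \<longleftrightarrow> (\<exists>f. bij_betw f (UNIV :: 'a set) {0..<a+b} \<and>
      (\<forall>x y. E x y \<longleftrightarrow> Kab_edge a b (f x) (f y)))"

end

theory Submission
  imports Defs
begin

definition pk :: "'a set \<Rightarrow> ('a \<Rightarrow> 'a \<Rightarrow> bool) \<Rightarrow> nat \<Rightarrow> (nat \<times> nat \<Rightarrow> 'a) \<Rightarrow> bool" where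
 "pk V H j f \<longleftrightarrow> inj_on f ({0..<j} \<times> {0..<3}) \<and> f ` ({0..<j} \<times> {0..<3}) \<subseteq> V \<and>
   (\<forall>i<j. H (f (i,0)) (f (i,1)) \<and> H (f (i,1)) (f (i,2)))"

definition bg :: "'a set \<Rightarrow> ('a \<Rightarrow> 'a \<Rightarrow> bool) \<Rightarrow> bool" where
 "bg X H \<longleftrightarrow> (\<forall>u w. H u w \<longrightarrow> H w u) \<and> (\<forall>u. \<not> H u u) \<and> (\<forall>u w. H u w \<longrightarrow> (u \<in> X \<longleftrightarrow> w \<notin> X))"

definition dg :: "'a set \<Rightarrow> ('a \<Rightarrow> 'a \<Rightarrow> bool) \<Rightarrow> 'a \<Rightarrow> nat" where
 "dg V H u = card {w\<in>V. H u w}"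

definition ec :: "'a set \<Rightarrow> 'a set \<Rightarrow> ('a \<Rightarrow> 'a \<Rightarrow> bool) \<Rightarrow> nat" where
 "ec V X H = card {(u,w). u \<in> V \<and> u \<in> X \<and> w \<in> V \<and> w \<notin> X \<and> H u w}"

lemma pk_mono_set: "pk V H j f \<Longrightarrow> V \<subseteq> W \<Longrightarrow> pk W H j f"
  unfolding pk_def by blast

lemma pk_le: "pk V H j f \<Longrightarrow> i \<le> j \<Longrightarrow> pk V H i f"
  unfolding pk_def
  by (auto intro: inj_on_subset)

lemma pk_card: "finite V \<Longrightarrow> pk V H j f \<Longrightarrow> 3*j \<le> card V"
proof -
  assume fV: "finite V" and p: "pk V H j f"
  have "card (f ` ({0..<j} \<times> {0..<3})) = card ({0..<j} \<times> {0..<(3::nat)})"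
    using p unfolding pk_def by (simp add: card_image)
  also have "\<dots> = 3*j" by (simp add: card_cartesian_product)
  finally show ?thesis using p fV unfolding pk_def by (metis card_mono)
qed

lemma pk_extend:
  assumes p: "pk V H j f" and abc: "a \<in> V" "c \<in> V" "b \<in> V" "a \<noteq> c" "c \<noteq> b" "a \<noteq> b"
    and nots: "a \<notin> f ` ({0..<j} \<times> {0..<3})" "b \<notin> f ` ({0..<j} \<times> {0..<3})"
      "c \<notin> f ` ({0..<j} \<times> {0..<3})"
    and e: "H a c" "H c b"
  shows "pk V H (Suc j) (f((j,0):=a,(j,1):=c,(j,2):=b))"
proof -
  let ?g = "f((j,0):=a,(j,1):=c,(j,2):=b)"
  have inj: "inj_on f ({0..<j} \<times> {0..<3})" and sub: "f ` ({0..<j} \<times> {0..<3}) \<subseteq> V"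
    and ed: "\<forall>i<j. H (f (i,0)) (f (i,1)) \<and> H (f (i,1)) (f (i,2))"
    using p unfolding pk_def by auto
  have dom: "{0..<Suc j} \<times> {0..<3::nat} = ({0..<j} \<times> {0..<3}) \<union> {(j,0),(j,1),(j,2)}"
    by auto
  have g_old: "\<And>x. x \<in> {0..<j} \<times> {0..<3} \<Longrightarrow> ?g x = f x" by auto
  have "inj_on ?g ({0..<Suc j} \<times> {0..<3})"
    unfolding dom
  proof (rule inj_onI)
    fix x y assume x: "x \<in> {0..<j} \<times> {0..<3} \<union> {(j, 0), (j, 1), (j, 2)}"
      and y: "y \<in> {0..<j} \<times> {0..<3} \<union> {(j, 0), (j, 1), (j, 2)}" and xy: "?g x = ?g y"
    show "x = y"
    proof (cases "x \<in> {0..<j} \<times> {0..<3}")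
      case True
      note xin = True
      then have gx: "?g x = f x" by auto
      show ?thesis
      proof (cases "y \<in> {0..<j} \<times> {0..<3}")
        case True
        then have "?g y = f y" by auto
        then show ?thesis using gx xy xin True inj by (metis inj_onD)
      next
        case False
        then have "y \<in> {(j, 0), (j, 1), (j, 2)}" using y by auto
        then show ?thesis using gx xy xin nots by auto
      qed
    next
      case False
      then have xj: "x \<in> {(j, 0), (j, 1), (j, 2)}" using x by auto
      show ?thesis
      proof (cases "y \<in> {0..<j} \<times> {0..<3}")
        case True
        then show ?thesis using xj xy nots by auto
      next
        case False
        then have "y \<in> {(j, 0), (j, 1), (j, 2)}" using y by auto
        then show ?thesis using xj xy abc by auto
      qed
    qed
  qed
  moreover have "?g ` ({0..<Suc j} \<times> {0..<3}) \<subseteq> V"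
    unfolding dom using sub abc by auto
  moreover have "\<forall>i<Suc j. H (?g (i,0)) (?g (i,1)) \<and> H (?g (i,1)) (?g (i,2))"
    using ed e by (auto simp: less_Suc_eq)
  ultimately show ?thesis unfolding pk_def by blast
qed

lemma pk_zero: "pk V H 0 f"
  unfolding pk_def by auto

lemma card_pk_img: "pk V H j f \<Longrightarrow> card (f ` ({0..<j} \<times> {0..<3})) = 3*j"
  unfolding pk_def by (simp add: card_image card_cartesian_product)

lemma two_elems:
  assumes "finite A" "card A \<ge> 2"
  obtains a b where "a \<in> A" "b \<in> A" "a \<noteq> b"
proof -
  from assms have "A \<noteq> {}" by auto
  then obtain a where a: "a \<in> A" by auto
  have "card (A - {a}) \<ge> 1" using assms a by auto
  then have "A - {a} \<noteq> {}" by (metis card.empty not_one_le_zero)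
  then obtain b where "b \<in> A - {a}" by auto
  then show ?thesis using that a by auto
qed

lemma pk_extend_deg:
  assumes fV: "finite V" and bgH: "bg X H" and p: "pk V H j f" and cV: "c \<in> V"
    and cn: "c \<notin> f ` ({0..<j} \<times> {0..<3})" and d: "dg V H c \<ge> 3*j+2"
  shows "\<exists>g. pk V H (Suc j) g"
proof -
  let ?S = "f ` ({0..<j} \<times> {0..<3})"
  let ?N = "{w\<in>V. H c w} - ?S"
  have "card {w\<in>V. H c w} - card ?S \<le> card ?N"
    by (rule diff_card_le_card_Diff) simp
  then have "card ?N \<ge> 2" using d card_pk_img[OF p] unfolding dg_def by linarith
  then obtain a b where ab: "a \<in> ?N" "b \<in> ?N" "a \<noteq> b"
    using two_elems[of ?N] fV by auto
  have irr: "\<And>u. \<not> H u u" and sym: "\<And>u w. H u w \<Longrightarrow> H w u" using bgH unfolding bg_def by auto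
  have "pk V H (Suc j) (f((j,0):=a,(j,1):=c,(j,2):=b))"
    apply (rule pk_extend[OF p])
    using ab cV cn irr sym by auto
  then show ?thesis by blast
qed

lemma touch_card:
  assumes fV: "finite V" and bgH: "bg X H" and v: "v \<in> V"
  shows "card {(u,w). u \<in> V \<and> u \<in> X \<and> w \<in> V \<and> w \<notin> X \<and> H u w \<and> (u = v \<or> w = v)} = dg V H v"
proof (cases "v \<in> X")
  case True
  have "{(u,w). u \<in> V \<and> u \<in> X \<and> w \<in> V \<and> w \<notin> X \<and> H u w \<and> (u = v \<or> w = v)}
        = (\<lambda>w. (v,w)) ` {w\<in>V. H v w}"
    using True bgH v unfolding bg_def by auto
  then show ?thesis unfolding dg_def by (simp add: card_image inj_on_def)
next
  case False
  have "{(u,w). u \<in> V \<and> u \<in> X \<and> w \<in> V \<and> w \<notin> X \<and> H u w \<and> (u = v \<or> w = v)}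
        = (\<lambda>u. (u,v)) ` {w\<in>V. H v w}"
    using False bgH v unfolding bg_def by auto
  then show ?thesis unfolding dg_def by (simp add: card_image inj_on_def)
qed

lemma ec_finite: "finite V \<Longrightarrow> finite {(u,w). u \<in> V \<and> u \<in> X \<and> w \<in> V \<and> w \<notin> X \<and> H u w \<and> P u w}"
  by (rule finite_subset[of _ "V \<times> V"]) auto

lemma ec_remove:
  assumes fV: "finite V" and bgH: "bg X H" and v: "v \<in> V"
  shows "ec V X H = ec (V - {v}) X H + dg V H v"
proof -
  let ?A = "{(u,w). u \<in> V - {v} \<and> u \<in> X \<and> w \<in> V - {v} \<and> w \<notin> X \<and> H u w}"
  let ?B = "{(u,w). u \<in> V \<and> u \<in> X \<and> w \<in> V \<and> w \<notin> X \<and> H u w \<and> (u = v \<or> w = v)}"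
  have eq: "{(u,w). u \<in> V \<and> u \<in> X \<and> w \<in> V \<and> w \<notin> X \<and> H u w} = ?A \<union> ?B" by auto
  have fA: "finite ?A" by (rule finite_subset[of _ "V \<times> V"]) (auto simp: fV)
  have fB: "finite ?B" by (rule finite_subset[of _ "V \<times> V"]) (auto simp: fV)
  have "card (?A \<union> ?B) = card ?A + card ?B"
    by (rule card_Un_disjoint[OF fA fB]) auto
  then show ?thesis unfolding ec_def eq using touch_card[OF fV bgH v] by simp
qed

lemma ec_prod: "finite V \<Longrightarrow> ec V X H \<le> card (V \<inter> X) * card (V - X)"
proof -
  assume fV: "finite V"
  have "{(u,w). u \<in> V \<and> u \<in> X \<and> w \<in> V \<and> w \<notin> X \<and> H u w} \<subseteq> (V \<inter> X) \<times> (V - X)" by auto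
  then have "ec V X H \<le> card ((V \<inter> X) \<times> (V - X))"
    unfolding ec_def by (rule card_mono[rotated]) (simp add: fV)
  then show ?thesis by (simp add: card_cartesian_product)
qed

lemma arith_aux:
  fixes m d t :: nat
  assumes "t \<le> m + 1"
  shows "t * (18*m + 17) + (11*m + 18 + d) \<le> 2*(m+1)*(10*m+17+d) + 1"
proof -
  have "t * (18*m + 17) \<le> (m+1)*(18*m+17)" using assms by (rule mult_right_mono) simp
  moreover have "(m+1)*(18*m+17) + (11*m + 18 + d) \<le> 2*(m+1)*(10*m+17+d) + 1"
    by (simp add: algebra_simps)
  ultimately show ?thesis by linarith
qed

lemma arith_low:
  fixes k n t e c :: nat
  assumes k2: "k \<ge> 2" and tk: "t \<le> k-1" and n: "n \<ge> 11*k-4"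
    and e: "e \<le> t*(9*k-8) + c" and c: "2*c \<le> n - 3*t" and t3: "3*t \<le> n"
  shows "e \<le> (k-1)*(n-k+1)"
proof -
  obtain m where m: "k = m + 2" using k2 by (metis add.commute le_Suc_ex)
  have "11*k-4 = 11*m+18" using m by simp
  then obtain d where d: "n = 11*m + 18 + d" using n le_Suc_ex by (metis le_add_diff_inverse)
  have t: "t \<le> m+1" using tk m by simp
  have "2*e \<le> 2*t*(9*m+10) + 2*c" using e m by (simp add: algebra_simps)
  also have "\<dots> \<le> 2*t*(9*m+10) + (11*m + 18 + d - 3*t)" using c d by simp
  also have "\<dots> = t * (18*m + 17) + (11*m + 18 + d)" using t3 d by (simp add: algebra_simps)
  also have "\<dots> \<le> 2*(m+1)*(10*m+17+d) + 1" by (rule arith_aux[OF t])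
  finally have "2*e \<le> 2*((m+1)*(10*m+17+d)) + 1" by simp
  then have "e \<le> (m+1)*(10*m+17+d)" by linarith
  then show ?thesis using m d by (simp add: algebra_simps)
qed

lemma low_deg:
  assumes fV: "finite V" and bgH: "bg X H" and k2: "k \<ge> 2" and n: "card V \<ge> 11*k-4"
    and nopk: "\<not>(\<exists>f. pk V H k f)" and low: "\<forall>u\<in>V. dg V H u \<le> 3*k-2"
  shows "ec V X H \<le> (k-1)*(card V - k + 1)"
proof -
  have irr: "\<And>u. \<not> H u u" and sym: "\<And>u w. H u w \<Longrightarrow> H w u"
    and bip: "\<And>u w. H u w \<Longrightarrow> (u \<in> X \<longleftrightarrow> w \<notin> X)" using bgH unfolding bg_def by auto
  define J where "J = {j. \<exists>f. pk V H j f}"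
  have fJ: "finite J"
  proof (rule finite_subset[of _ "{..card V}"])
    show "J \<subseteq> {..card V}" unfolding J_def using pk_card[OF fV] by fastforce
  qed simp
  have "0 \<in> J" unfolding J_def using pk_zero by blast
  define t where "t = Max J"
  have "t \<in> J" unfolding t_def using fJ \<open>0 \<in> J\<close> by (intro Max_in) auto
  then obtain f where pf: "pk V H t f" unfolding J_def by blast
  have tk: "t < k"
  proof (rule ccontr)
    assume "\<not> t < k"
    then have "pk V H k f" using pk_le[OF pf] by simp
    then show False using nopk by blast
  qed
  have nomore: "\<not>(\<exists>g. pk V H (Suc t) g)"
  proof
    assume "\<exists>g. pk V H (Suc t) g"
    then have "Suc t \<in> J" unfolding J_def by blast
    then have "Suc t \<le> t" unfolding t_def using fJ by (simp add: Max_ge)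
    then show False by simp
  qed
  define S where "S = f ` ({0..<t} \<times> {0..<3})"
  define R where "R = V - S"
  have SV: "S \<subseteq> V" using pf unfolding pk_def S_def by auto
  have cS: "card S = 3*t" unfolding S_def by (rule card_pk_img[OF pf])
  have fR: "finite R" unfolding R_def using fV by simp
  have cR: "card R = card V - 3*t" unfolding R_def using SV cS fV by (simp add: card_Diff_subset finite_subset)
  have t3: "3*t \<le> card V" using pk_card[OF fV pf] .
  have R1: "card {w\<in>R. H r w} \<le> 1" if r: "r \<in> R" for r
  proof (rule ccontr)
    assume "\<not> card {w\<in>R. H r w} \<le> 1"
    then have "card {w\<in>R. H r w} \<ge> 2" by simp
    then obtain a b where ab: "a \<in> {w\<in>R. H r w}" "b \<in> {w\<in>R. H r w}" "a \<noteq> b"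
      using two_elems[of "{w\<in>R. H r w}"] fR by auto
    have "pk V H (Suc t) (f((t,0):=a,(t,1):=r,(t,2):=b))"
      apply (rule pk_extend[OF pf])
      using ab r irr sym unfolding R_def S_def by auto
    then show False using nomore by blast
  qed
  define tch where "tch v = {(u,w). u \<in> V \<and> u \<in> X \<and> w \<in> V \<and> w \<notin> X \<and> H u w \<and> (u = v \<or> w = v)}" for v
  have ftch: "finite (tch v)" for v unfolding tch_def by (rule finite_subset[of _ "V \<times> V"]) (auto simp: fV)
  have ctch: "v \<in> V \<Longrightarrow> card (tch v) \<le> 3*k-2" for v
    using touch_card[OF fV bgH, of v] low unfolding tch_def by auto
  have meet: "tch a \<inter> tch c \<noteq> {}" if "H a c" "a \<in> V" "c \<in> V" for a c
  proof (cases "a \<in> X")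
    case True
    then have "(a,c) \<in> tch a \<inter> tch c" using that bip unfolding tch_def by auto
    then show ?thesis by blast
  next
    case False
    then have "(c,a) \<in> tch a \<inter> tch c" using that bip sym unfolding tch_def by blast
    then show ?thesis by blast
  qed
  define TQ where "TQ i = tch (f (i,0)) \<union> tch (f (i,1)) \<union> tch (f (i,2))" for i
  have TQb: "card (TQ i) \<le> 9*k-8" if i: "i < t" for i
  proof -
    let ?a = "f (i,0)" and ?c = "f (i,1)" and ?b = "f (i,2)"
    have inV: "?a \<in> V" "?b \<in> V" "?c \<in> V" using pf i unfolding pk_def by auto
    have e: "H ?a ?c" "H ?c ?b" using pf i unfolding pk_def by auto
    have m1: "card (tch ?a \<inter> tch ?c) \<ge> 1"
      using meet[OF e(1) inV(1) inV(3)] ftch by (meson card_0_eq finite_Int less_one not_le)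
    have "(tch ?a \<union> tch ?c) \<inter> tch ?b \<noteq> {}" using meet[OF e(2) inV(3) inV(2)] by blast
    then have m2: "card ((tch ?a \<union> tch ?c) \<inter> tch ?b) \<ge> 1"
      using ftch by (meson card_0_eq finite_Int finite_UnI less_one not_le)
    have u1: "card (tch ?a \<union> tch ?c) + card (tch ?a \<inter> tch ?c) = card (tch ?a) + card (tch ?c)"
      using card_Un_Int[OF ftch ftch] by simp
    have u2: "card ((tch ?a \<union> tch ?c) \<union> tch ?b) + card ((tch ?a \<union> tch ?c) \<inter> tch ?b)
       = card (tch ?a \<union> tch ?c) + card (tch ?b)"
      using card_Un_Int[OF finite_UnI[OF ftch ftch] ftch] by simp
    have "card (TQ i) + 2 \<le> card (tch ?a) + card (tch ?c) + card (tch ?b)"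
      using u1 u2 m1 m2 unfolding TQ_def by linarith
    moreover have "card (tch ?a) + card (tch ?c) + card (tch ?b) \<le> 3*(3*k-2)"
      using ctch[OF inV(1)] ctch[OF inV(2)] ctch[OF inV(3)] by linarith
    ultimately show ?thesis using k2 by linarith
  qed
  define U where "U = {(u,w). u \<in> R \<and> u \<in> X \<and> w \<in> R \<and> w \<notin> X \<and> H u w}"
  have U1: "card U \<le> card (R \<inter> X)"
  proof -
    have "U \<subseteq> (\<Union>u\<in>R \<inter> X. {u} \<times> {w\<in>R. H u w})" unfolding U_def by auto
    then have "card U \<le> card (\<Union>u\<in>R \<inter> X. {u} \<times> {w\<in>R. H u w})"
      by (rule card_mono[rotated]) (auto simp: fR)
    also have "\<dots> \<le> (\<Sum>u\<in>R \<inter> X. card ({u} \<times> {w\<in>R. H u w}))"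
      by (rule card_UN_le) (simp add: fR)
    also have "\<dots> \<le> (\<Sum>u\<in>R \<inter> X. 1)"
      by (rule sum_mono) (use R1 in \<open>auto simp: card_cartesian_product\<close>)
    finally show ?thesis by simp
  qed
  have U2: "card U \<le> card (R - X)"
  proof -
    have "U \<subseteq> (\<Union>w\<in>R - X. {u\<in>R. H w u} \<times> {w})" unfolding U_def using sym by auto
    then have "card U \<le> card (\<Union>w\<in>R - X. {u\<in>R. H w u} \<times> {w})"
      by (rule card_mono[rotated]) (auto simp: fR)
    also have "\<dots> \<le> (\<Sum>w\<in>R - X. card ({u\<in>R. H w u} \<times> {w}))"
      by (rule card_UN_le) (simp add: fR)
    also have "\<dots> \<le> (\<Sum>w\<in>R - X. 1)"
      by (rule sum_mono) (use R1 in \<open>auto simp: card_cartesian_product\<close>)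
    finally show ?thesis by simp
  qed
  have "card R = card (R \<inter> X) + card (R - X)" using fR by (rule card_Int_Diff)
  then have U3: "2 * card U \<le> card V - 3*t" using U1 U2 cR by linarith
  let ?P = "{(u,w). u \<in> V \<and> u \<in> X \<and> w \<in> V \<and> w \<notin> X \<and> H u w}"
  have cover: "?P \<subseteq> (\<Union>i\<in>{0..<t}. TQ i) \<union> U"
  proof
    fix p assume p: "p \<in> ?P"
    obtain u w where uw: "p = (u,w)" by (cases p)
    show "p \<in> (\<Union>i\<in>{0..<t}. TQ i) \<union> U"
    proof (cases "u \<in> S \<or> w \<in> S")
      case True
      then obtain i e where ie: "i < t" "e < 3" "u = f (i,e) \<or> w = f (i,e)"
        unfolding S_def by auto
      have "e = 0 \<or> e = 1 \<or> e = 2" using ie by auto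
      then have "p \<in> TQ i" using ie p uw unfolding TQ_def tch_def by auto
      then show ?thesis using ie by auto
    next
      case False
      then have "p \<in> U" using p uw unfolding U_def R_def by auto
      then show ?thesis by auto
    qed
  qed
  have "ec V X H \<le> card ((\<Union>i\<in>{0..<t}. TQ i) \<union> U)"
  proof -
    have fU: "finite U" unfolding U_def by (rule finite_subset[of _ "R \<times> R"]) (auto simp: fR)
    have "finite ((\<Union>i\<in>{0..<t}. TQ i) \<union> U)" using fU ftch unfolding TQ_def by simp
    then show ?thesis unfolding ec_def by (rule card_mono[OF _ cover])
  qed
  also have "\<dots> \<le> card (\<Union>i\<in>{0..<t}. TQ i) + card U" by (rule card_Un_le)
  also have "card (\<Union>i\<in>{0..<t}. TQ i) \<le> (\<Sum>i\<in>{0..<t}. card (TQ i))" by (rule card_UN_le) simp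
  also have "\<dots> \<le> (\<Sum>i\<in>{0..<t}. 9*k-8)" by (rule sum_mono) (simp add: TQb)
  also have "\<dots> = t*(9*k-8)" by simp
  finally have "ec V X H \<le> t*(9*k-8) + card U" by simp
  then show ?thesis using arith_low[OF k2 _ n _ U3 t3] tk by simp
qed


lemma prod_mono_aux:
  fixes s k n :: nat
  assumes "s \<le> k" "k + s \<le> n"
  shows "s*(n-s) \<le> k*(n-k)"
proof -
  obtain d where d: "k = s + d" using assms(1) le_Suc_ex by blast
  obtain r where r: "n = k + s + r" using assms(2) le_Suc_ex by blast
  have "s*(n-s) = s*(s+d+r)" using d r by simp
  also have "\<dots> \<le> (s+d)*(s+r)" by (simp add: algebra_simps)
  also have "\<dots> = k*(n-k)" using d r by simp
  finally show ?thesis .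
qed

lemma no_pk_remove:
  assumes fV: "finite V" and bgH: "bg X H" and v: "v \<in> V" and d: "dg V H v \<ge> 3*j+2"
    and nopk: "\<not>(\<exists>f. pk V H (Suc j) f)"
  shows "\<not>(\<exists>f. pk (V - {v}) H j f)"
proof
  assume "\<exists>f. pk (V - {v}) H j f"
  then obtain f where f: "pk (V - {v}) H j f" by blast
  have f': "pk V H j f" using pk_mono_set[OF f] by blast
  have "v \<notin> f ` ({0..<j} \<times> {0..<3})" using f unfolding pk_def by auto
  then show False using pk_extend_deg[OF fV bgH f' v _ d] nopk by blast
qed

lemma nopk1_deg:
  assumes bgH: "bg X H" and nopk: "\<not>(\<exists>f. pk W H 1 f)" and r: "r \<in> W" and fW: "finite W"
  shows "card {w\<in>W. H r w} \<le> 1"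
proof (rule ccontr)
  have irr: "\<And>u. \<not> H u u" and sym: "\<And>u w. H u w \<Longrightarrow> H w u" using bgH unfolding bg_def by auto
  assume "\<not> card {w\<in>W. H r w} \<le> 1"
  then have "card {w\<in>W. H r w} \<ge> 2" by simp
  then obtain a b where ab: "a \<in> {w\<in>W. H r w}" "b \<in> {w\<in>W. H r w}" "a \<noteq> b"
    using two_elems[of "{w\<in>W. H r w}"] fW by auto
  have "pk W H (Suc 0) ((\<lambda>_. r)((0,0):=a,(0,1):=r,(0,2):=b))"
    apply (rule pk_extend[OF pk_zero])
    using ab r irr sym by auto
  then show False using nopk by simp
qed

lemma base2:
  assumes fV: "finite V" and n: "card V \<ge> 18" and bgH: "bg X H" and nopk: "\<not>(\<exists>f. pk V H 2 f)"
  shows "ec V X H \<le> (2-1)*(card V - 2 + 1)"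
proof (cases "\<exists>v\<in>V. dg V H v \<ge> 5")
  case True
  then obtain v where v: "v \<in> V" and dv: "dg V H v \<ge> 5" by blast
  have sym: "\<And>u w. H u w \<Longrightarrow> H w u" and bip: "\<And>u w. H u w \<Longrightarrow> (u \<in> X \<longleftrightarrow> w \<notin> X)"
    and irr: "\<And>u. \<not> H u u"
    using bgH unfolding bg_def by auto
  have np1: "\<not>(\<exists>f. pk (V - {v}) H 1 f)"
    using no_pk_remove[OF fV bgH v _ ] dv nopk by (simp add: numeral_2_eq_2)
  let ?W = "V - {v}"
  have fW: "finite ?W" using fV by simp
  have d1: "\<And>r. r \<in> ?W \<Longrightarrow> card {w\<in>?W. H r w} \<le> 1"
    using nopk1_deg[OF bgH np1 _ fW] by blast
  let ?P = "{(u,w). u \<in> ?W \<and> u \<in> X \<and> w \<in> ?W \<and> w \<notin> X \<and> H u w}"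
  let ?N = "{w\<in>V. H v w}"
  have fP: "finite ?P" by (rule finite_subset[of _ "V \<times> V"]) (auto simp: fV)
  have key: "card ?P + card ?N \<le> card ?W"
  proof (cases "v \<in> X")
    case True
    have inj: "inj_on fst ?P"
    proof (rule inj_onI)
      fix p q assume p: "p \<in> ?P" and q: "q \<in> ?P" and e: "fst p = fst q"
      obtain u w where pu: "p = (u,w)" by (cases p)
      obtain u' w' where qu: "q = (u',w')" by (cases q)
      from p pu have pw: "u \<in> ?W" "w \<in> ?W" "H u w" by simp_all
      from q qu e pu have qw: "w' \<in> ?W" "H u w'" "u' = u" by simp_all
      have fin: "finite {x\<in>?W. H u x}" using fW by simp
      have "card {x\<in>?W. H u x} \<le> Suc 0" using d1[OF pw(1)] by simp
      then have "\<forall>a1\<in>{x\<in>?W. H u x}. \<forall>a2\<in>{x\<in>?W. H u x}. a1 = a2"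
        using card_le_Suc0_iff_eq[OF fin] by blast
      then have "w = w'" using pw qw by blast
      then show "p = q" using pu qu qw by simp
    qed
    have sub: "fst ` ?P \<union> ?N \<subseteq> ?W"
    proof
      fix x assume "x \<in> fst ` ?P \<union> ?N"
      then show "x \<in> ?W"
      proof
        assume "x \<in> fst ` ?P" then show ?thesis by auto
      next
        assume "x \<in> ?N" then show ?thesis using irr by auto
      qed
    qed
    have disj: "fst ` ?P \<inter> ?N = {}"
    proof -
      have "fst ` ?P \<subseteq> X" by auto
      moreover have "?N \<inter> X = {}" using True bip by auto
      ultimately show ?thesis by blast
    qed
    have fN: "finite ?N" using fV by simp
    have "card (fst ` ?P \<union> ?N) = card (fst ` ?P) + card ?N"
      by (rule card_Un_disjoint[OF finite_imageI[OF fP] fN disj])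
    also have "card (fst ` ?P) = card ?P" using inj by (simp add: card_image)
    finally show ?thesis using card_mono[OF fW sub] by simp
  next
    case False
    have inj: "inj_on snd ?P"
    proof (rule inj_onI)
      fix p q assume p: "p \<in> ?P" and q: "q \<in> ?P" and e: "snd p = snd q"
      obtain u w where pu: "p = (u,w)" by (cases p)
      obtain u' w' where qu: "q = (u',w')" by (cases q)
      from p pu have pw: "u \<in> ?W" "w \<in> ?W" "H w u" using sym by simp_all
      from q qu e pu have qw: "u' \<in> ?W" "H w u'" "w' = w" using sym by simp_all
      have fin: "finite {x\<in>?W. H w x}" using fW by simp
      have "card {x\<in>?W. H w x} \<le> Suc 0" using d1[OF pw(2)] by simp
      then have "\<forall>a1\<in>{x\<in>?W. H w x}. \<forall>a2\<in>{x\<in>?W. H w x}. a1 = a2"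
        using card_le_Suc0_iff_eq[OF fin] by blast
      then have "u = u'" using pw qw by blast
      then show "p = q" using pu qu qw by simp
    qed
    have sub: "snd ` ?P \<union> ?N \<subseteq> ?W"
    proof
      fix x assume "x \<in> snd ` ?P \<union> ?N"
      then show "x \<in> ?W"
      proof
        assume "x \<in> snd ` ?P" then show ?thesis by auto
      next
        assume "x \<in> ?N" then show ?thesis using irr by auto
      qed
    qed
    have disj: "snd ` ?P \<inter> ?N = {}"
    proof -
      have "snd ` ?P \<inter> X = {}" by auto
      moreover have "?N \<subseteq> X" using False bip by auto
      ultimately show ?thesis by blast
    qed
    have fN: "finite ?N" using fV by simp
    have "card (snd ` ?P \<union> ?N) = card (snd ` ?P) + card ?N"
      by (rule card_Un_disjoint[OF finite_imageI[OF fP] fN disj])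
    also have "card (snd ` ?P) = card ?P" using inj by (simp add: card_image)
    finally show ?thesis using card_mono[OF fW sub] by simp
  qed
  have "ec V X H = card ?P + card ?N" using ec_remove[OF fV bgH v] unfolding ec_def dg_def by simp
  then show ?thesis using key v fV by simp
next
  case False
  then have "\<forall>u\<in>V. dg V H u \<le> 3*2-2" by auto
  from low_deg[OF fV bgH _ _ nopk this] n show ?thesis by simp
qed

lemma stepk:
  assumes k2: "k \<ge> 2"
    and IH: "\<And>W. finite W \<Longrightarrow> card W \<ge> 11*k-4 \<Longrightarrow> \<not>(\<exists>f. pk W H k f) \<Longrightarrow> ec W X H \<le> (k-1)*(card W - k + 1)"
    and fV: "finite V" and n: "card V \<ge> 11*Suc k-4" and bgH: "bg X H" and nopk: "\<not>(\<exists>f. pk V H (Suc k) f)"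
  shows "ec V X H \<le> (Suc k-1)*(card V - Suc k + 1)"
proof -
  have "card V - Suc k + 1 = card V - k" using n k2 by simp
  then have tgt: "(Suc k-1)*(card V - Suc k + 1) = k*(card V - k)" by simp
  have "ec V X H \<le> k*(card V - k)"
proof (cases "\<exists>v\<in>V. dg V H v \<ge> 3*k+2")
  case True
  then obtain v where v: "v \<in> V" and dv: "dg V H v \<ge> 3*k+2" by blast
  have bip: "\<And>u w. H u w \<Longrightarrow> (u \<in> X \<longleftrightarrow> w \<notin> X)" using bgH unfolding bg_def by auto
  have np: "\<not>(\<exists>f. pk (V - {v}) H k f)" using no_pk_remove[OF fV bgH v dv nopk] .
  have cW: "card (V - {v}) = card V - 1" using v fV by simp
  have "ec (V - {v}) X H \<le> (k-1)*(card (V - {v}) - k + 1)"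
    using IH[of "V - {v}"] np cW n fV by simp
  moreover have "card (V - {v}) - k + 1 = card V - k" using cW n by simp
  ultimately have "ec (V - {v}) X H \<le> (k-1)*(card V - k)" by metis
  then have e1: "ec V X H \<le> (k-1)*(card V - k) + dg V H v"
    using ec_remove[OF fV bgH v] by simp
  show "ec V X H \<le> k*(card V - k)"
  proof (cases "dg V H v \<le> card V - k")
    case True
    obtain m where m: "k = Suc m" using k2 by (cases k) auto
    have "(k-1)*(card V - k) + (card V - k) = k*(card V - k)" using m by simp
    then show "ec V X H \<le> k*(card V - k)" using e1 True by simp
  next
    case False
    let ?s = "card (V \<inter> X)" and ?s' = "card (V - X)"
    have ss: "?s + ?s' = card V" using card_Int_Diff[OF fV, of X] by simp
    have "ec V X H \<le> ?s * ?s'" using ec_prod[OF fV] .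
    moreover have "?s * ?s' \<le> k*(card V - k)"
    proof (cases "v \<in> X")
      case True
      have "{w\<in>V. H v w} \<subseteq> V - X" using True bip by auto
      then have "dg V H v \<le> ?s'" unfolding dg_def using fV by (simp add: card_mono)
      then have sk: "?s \<le> k" using False ss by linarith
      have "?s * (card V - ?s) \<le> k * (card V - k)" by (rule prod_mono_aux) (use sk n in auto)
      then show ?thesis using ss by (metis add_diff_cancel_left')
    next
      case False2: False
      have "{w\<in>V. H v w} \<subseteq> V \<inter> X" using False2 bip by auto
      then have "dg V H v \<le> ?s" unfolding dg_def using fV by (simp add: card_mono)
      then have sk: "?s' \<le> k" using False ss by linarith
      have "?s' * (card V - ?s') \<le> k * (card V - k)" by (rule prod_mono_aux) (use sk n in auto)
      then show ?thesis using ss by (metis add_diff_cancel_right' mult.commute)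
    qed
    ultimately show "ec V X H \<le> k*(card V - k)" by simp
  qed
next
  case False
  have low: "\<forall>u\<in>V. dg V H u \<le> 3 * Suc k - 2" using False by auto
  show "ec V X H \<le> k*(card V - k)" using low_deg[OF fV bgH _ n nopk low] k2 tgt by simp
qed
  then show ?thesis using tgt by simp
qed

lemma bip_bound:
  assumes "k \<ge> 2" "finite V" "card V \<ge> 11*k-4" "bg X H" "\<not>(\<exists>f. pk V H k f)"
  shows "ec V X H \<le> (k-1)*(card V - k + 1)"
  using assms
proof (induction k arbitrary: V rule: nat_induct_at_least)
  case base
  then show ?case using base2 by simp
next
  case (Suc k)
  show ?case by (rule stepk[OF Suc.hyps(1) Suc.IH]) (use Suc.prems in auto)
qed

definition symm :: "real^'n^'n \<Rightarrow> bool" where "symm M \<longleftrightarrow> (\<forall>i j. M$i$j = M$j$i)"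

lemma symm_inner: "symm M \<Longrightarrow> x \<bullet> (M *v y) = y \<bullet> (M *v x)"
proof -
  assume s: "symm M"
  have "x \<bullet> (M *v y) = (\<Sum>i\<in>UNIV. \<Sum>j\<in>UNIV. x$i * M$i$j * y$j)"
    by (simp add: inner_vec_def matrix_vector_mult_def sum_distrib_left mult.assoc)
  also have "\<dots> = (\<Sum>j\<in>UNIV. \<Sum>i\<in>UNIV. x$i * M$i$j * y$j)" by (rule sum.swap)
  also have "\<dots> = (\<Sum>j\<in>UNIV. \<Sum>i\<in>UNIV. y$j * M$j$i * x$i)"
    using s unfolding symm_def by (simp add: mult.commute mult.left_commute)
  also have "\<dots> = y \<bullet> (M *v x)"
    by (simp add: inner_vec_def matrix_vector_mult_def sum_distrib_left mult.assoc)
  finally show ?thesis .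
qed

lemma quad_contra:
  fixes W c d :: real
  assumes wpos: "W > 0" and d_def: "d = W / (\<bar>c\<bar> + 1)" and h: "0 \<le> -2 * d * W + d^2 * c"
  shows False
proof -
    have dpos: "d > 0" unfolding d_def using wpos by simp
    have "d^2 * c \<le> d^2 * (\<bar>c\<bar> + 1)"
      by (rule mult_left_mono) auto
    also have "d^2 * (\<bar>c\<bar> + 1) = d * W"
    proof -
      have "d * (\<bar>c\<bar> + 1) = W" unfolding d_def by (simp add: add_pos_nonneg)
      then show ?thesis by (simp add: power2_eq_square mult.assoc)
    qed
    finally have "0 \<le> - d * W" using h by simp
    then show False using mult_pos_pos[OF dpos wpos] by linarith
qed

lemma expand_lemma:
  fixes M :: "real^'n^'n" and x0 w :: "real^'n"
  assumes sy: "x0 \<bullet> (M *v w) = w \<bullet> (M *v x0)" and x0x0: "x0 \<bullet> x0 = 1"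
   and ww: "w \<bullet> w = w \<bullet> (M *v x0) - \<mu> * (w \<bullet> x0)" and mu: "\<mu> = x0 \<bullet> (M *v x0)"
  shows "(x0 + t *\<^sub>R w) \<bullet> (M *v (x0 + t *\<^sub>R w)) - \<mu> * ((x0 + t *\<^sub>R w) \<bullet> (x0 + t *\<^sub>R w))
       = 2 * t * (w \<bullet> w) + t^2 * (w \<bullet> (M *v w) - \<mu> * (w \<bullet> w))"
proof -
  have "(x0 + t *\<^sub>R w) \<bullet> (M *v (x0 + t *\<^sub>R w)) = x0 \<bullet> (M *v x0) + t * (x0 \<bullet> (M *v w)) + t * (w \<bullet> (M *v x0)) + t*t*(w \<bullet> (M *v w))"
    by (simp add: matrix_vector_right_distrib matrix_vector_mult_scaleR inner_add_left inner_add_right algebra_simps)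
  moreover have "(x0 + t *\<^sub>R w) \<bullet> (x0 + t *\<^sub>R w) = x0 \<bullet> x0 + 2*t*(w \<bullet> x0) + t*t*(w \<bullet> w)"
    by (simp add: inner_add_left inner_add_right inner_commute algebra_simps)
  moreover have "x0 \<bullet> w = w \<bullet> x0" by (rule inner_commute)
  moreover have ww': "w \<bullet> (M *v x0) = w \<bullet> w + \<mu> * (w \<bullet> x0)" using ww by simp
  ultimately show ?thesis using sy x0x0 ww' mu[symmetric] by (simp add: power2_eq_square algebra_simps)
qed

lemma eig_exists:
  fixes M :: "real^'n^'n"
  assumes s: "symm M"
  shows "\<exists>\<mu>. is_eigenvalue M \<mu>"
proof -
  let ?q = "\<lambda>x::real^'n. x \<bullet> (M *v x)"
  have cont: "continuous_on (sphere 0 1) ?q"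
    by (intro continuous_intros)
  have ne: "sphere (0::real^'n) 1 \<noteq> {}"
  proof -
    obtain i :: 'n where True by simp
    have "norm (axis i (1::real)) = 1" by simp
    then have "axis i (1::real) \<in> sphere 0 1" by (simp add: sphere_def dist_norm)
    then show ?thesis by blast
  qed
  obtain x0 where x0: "x0 \<in> sphere 0 1" and mn: "\<forall>y\<in>sphere 0 1. ?q x0 \<le> ?q y"
    using continuous_attains_inf[OF compact_sphere ne cont] by blast
  define \<mu> where "\<mu> = ?q x0"
  have nx0: "norm x0 = 1" using x0 by (simp add: sphere_def dist_norm)
  have x0x0: "x0 \<bullet> x0 = 1" using nx0 by (simp add: norm_eq_sqrt_inner)
  have ray: "?q y \<ge> \<mu> * (y \<bullet> y)" for y
  proof (cases "y = 0")
    case True then show ?thesis by simp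
  next
    case False
    let ?z = "(1 / norm y) *\<^sub>R y"
    have "?z \<in> sphere 0 1" using False by (simp add: sphere_def dist_norm)
    then have "\<mu> \<le> ?q ?z" using mn unfolding \<mu>_def by blast
    also have "?q ?z = ?q y / (norm y)^2"
      by (simp add: matrix_vector_mult_scaleR power2_eq_square)
    finally have "\<mu> * (norm y)^2 \<le> ?q y" using False by (simp add: pos_le_divide_eq)
    then show ?thesis by (simp add: power2_norm_eq_inner)
  qed
  define w where "w = M *v x0 - \<mu> *\<^sub>R x0"
  have "w \<bullet> w = 0"
  proof (rule ccontr)
    assume "w \<bullet> w \<noteq> 0"
    then have "w \<noteq> 0" by auto
    then have wpos: "w \<bullet> w > 0" by simp
    define c where "c = ?q w - \<mu> * (w \<bullet> w)"
    have expand: "?q (x0 + t *\<^sub>R w) - \<mu> * ((x0 + t *\<^sub>R w) \<bullet> (x0 + t *\<^sub>R w))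
       = 2 * t * (w \<bullet> w) + t^2 * c" for t
    proof -
      have sy: "x0 \<bullet> (M *v w) = w \<bullet> (M *v x0)" using symm_inner[OF s] .
      have ww: "w \<bullet> w = w \<bullet> (M *v x0) - \<mu> * (w \<bullet> x0)" unfolding w_def
        by (simp add: inner_diff_right)
      have ee: "?q (x0 + t *\<^sub>R w) - \<mu> * ((x0 + t *\<^sub>R w) \<bullet> (x0 + t *\<^sub>R w)) = 2 * t * (w \<bullet> w) + t^2 * (w \<bullet> (M *v w) - \<mu> * (w \<bullet> w))" by (rule expand_lemma[OF sy x0x0 ww \<mu>_def])
      show ?thesis unfolding c_def by (rule ee)
    qed
    define d where "d = (w \<bullet> w) / (\<bar>c\<bar> + 1)"
    have "0 \<le> ?q (x0 + (-d) *\<^sub>R w) - \<mu> * ((x0 + (-d) *\<^sub>R w) \<bullet> (x0 + (-d) *\<^sub>R w))"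
      using ray[of "x0 + (-d) *\<^sub>R w"] by linarith
    also have "\<dots> = -2 * d * (w \<bullet> w) + d^2 * c" unfolding expand by simp
    finally show False by (rule quad_contra[OF wpos d_def])
  qed
  then have "w = 0" by simp
  then have "M *v x0 = \<mu> *\<^sub>R x0" unfolding w_def by simp
  moreover have "x0 \<noteq> 0" using nx0 by auto
  ultimately show ?thesis unfolding is_eigenvalue_def by blast
qed

lemma eig_finite:
  fixes M :: "real^'n^'n"
  assumes s: "symm M"
  shows "finite {\<mu>. is_eigenvalue M \<mu>}"
proof -
  let ?L = "{\<mu>. is_eigenvalue M \<mu>}"
  define ev where "ev \<mu> = (SOME v. v \<noteq> 0 \<and> M *v v = \<mu> *\<^sub>R v)" for \<mu>
  have evp: "ev \<mu> \<noteq> 0 \<and> M *v ev \<mu> = \<mu> *\<^sub>R ev \<mu>" if "\<mu> \<in> ?L" for \<mu>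
    unfolding ev_def by (rule someI_ex) (use that in \<open>auto simp: is_eigenvalue_def\<close>)
  have inj: "inj_on ev ?L"
  proof (rule inj_onI)
    fix a b assume a: "a \<in> ?L" and b: "b \<in> ?L" and e: "ev a = ev b"
    have h1: "M *v ev a = a *\<^sub>R ev a" using evp[OF a] by blast
    have h2: "M *v ev b = b *\<^sub>R ev b" using evp[OF b] by blast
    have "a *\<^sub>R ev a = b *\<^sub>R ev a" using h1 h2 e by metis
    then have "(a - b) *\<^sub>R ev a = 0" by (simp only: scaleR_diff_left diff_self)
    then have "a - b = 0 \<or> ev a = 0" by (simp only: scaleR_eq_0_iff)
    then show "a = b" using evp[OF a] by auto
  qed
  have orth: "pairwise orthogonal (ev ` ?L)"
  proof (rule pairwiseI)
    fix x y assume x: "x \<in> ev ` ?L" and y: "y \<in> ev ` ?L" and xy: "x \<noteq> y"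
    obtain a where a: "a \<in> ?L" "x = ev a" using x by blast
    obtain b where b: "b \<in> ?L" "y = ev b" using y by blast
    have ab: "a \<noteq> b" using xy a b by blast
    have "a * (x \<bullet> y) = (M *v x) \<bullet> y" using evp[OF a(1)] a(2) by simp
    also have "\<dots> = y \<bullet> (M *v x)" by (simp add: inner_commute)
    also have "\<dots> = x \<bullet> (M *v y)" using symm_inner[OF s] by simp
    also have "\<dots> = b * (x \<bullet> y)" using evp[OF b(1)] b(2) by simp
    finally have "(a - b) * (x \<bullet> y) = 0" by (simp add: algebra_simps)
    then show "orthogonal x y" using ab unfolding orthogonal_def by simp
  qed
  have "0 \<notin> ev ` ?L" using evp by auto
  then have "independent (ev ` ?L)" using pairwise_orthogonal_independent[OF orth] by simp
  then have "finite (ev ` ?L)" using independent_imp_finite by blast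
  then show ?thesis using finite_imageD[OF _ inj] by blast
qed

lemma prod_strict_aux:
  fixes p K n :: nat
  assumes "p < K" "K + p < n"
  shows "p*(n-p) < K*(n-K)"
proof -
  obtain d where d0: "K = Suc (p + d)" using less_imp_Suc_add[OF assms(1)] by blast
  then have d: "K = p + Suc d" by simp
  obtain r where r0: "n = Suc (K + p + r)" using less_imp_Suc_add[OF assms(2)] by blast
  then have r: "n = K + p + Suc r" by simp
  have "p*(n-p) = p*(p+Suc d+Suc r)" using d r by simp
  also have "\<dots> < (p+Suc d)*(p+Suc r)" by (simp add: algebra_simps)
  also have "\<dots> = K*(n-K)" using d r by simp
  finally show ?thesis .
qed

lemma arith_eq:
  fixes k n p q :: nat
  assumes k2: "k \<ge> 2" and n: "n \<ge> 11*k-4" and pq: "p*q = (k-1)*(n-k+1)" and pqn: "p + q \<le> n"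
    and c1: "\<not>(p \<ge> k \<and> q \<ge> 2*k)" and c2: "\<not>(q \<ge> k \<and> p \<ge> 2*k)"
  shows "(p = k-1 \<and> q = n-k+1) \<or> (q = k-1 \<and> p = n-k+1)"
proof -
  obtain m where m: "k = m + 2" using k2 by (metis add.commute le_Suc_ex)
  have "11*k-4 = 11*m+18" using m by simp
  then obtain d where d: "n = 11*m + 18 + d" using n le_Suc_ex by (metis le_add_diff_inverse)
  let ?K = "m+1"
  have nK: "n - k + 1 = n - ?K" using m d by simp
  have k1: "k - 1 = ?K" using m by simp
  have pq': "p*q = ?K*(n-?K)" using pq by (simp only: k1 nK)
  have Kpos: "?K > 0" by simp
  have side: "p \<le> ?K \<Longrightarrow> q \<le> n - p \<Longrightarrow> p*q = ?K*(n-?K) \<Longrightarrow> p = ?K \<and> q = n - ?K" for p q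
  proof -
    assume a: "p \<le> ?K" "q \<le> n - p" "p*q = ?K*(n-?K)"
    have pK: "p = ?K"
    proof (rule ccontr)
      assume "p \<noteq> ?K"
      then have "p < ?K" using a by simp
      then have "p*(n-p) < ?K*(n-?K)" by (rule prod_strict_aux) (use d \<open>p < ?K\<close> in simp)
      moreover have "p*q \<le> p*(n-p)" using a(2) by (rule mult_left_mono) simp
      ultimately show False using a(3) by linarith
    qed
    then have "?K*q = ?K*(n-?K)" using a by simp
    then have "q = n - ?K" using Kpos mult_left_cancel[of ?K q "n - ?K"] by linarith
    then show ?thesis using pK by simp
  qed
  show ?thesis
  proof (cases "p \<le> ?K")
    case True
    moreover have "q \<le> n - p" using pqn by simp
    ultimately have "p = ?K \<and> q = n - ?K" using side[of p q] pq' by blast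
    then show ?thesis using m nK by simp
  next
    case False
    show ?thesis
    proof (cases "q \<le> ?K")
      case True
      moreover have "p \<le> n - q" using pqn by simp
      moreover have "q*p = ?K*(n-?K)" using pq' by (simp add: mult.commute)
      ultimately have "q = ?K \<and> p = n - ?K" using side[of q p] by blast
      then show ?thesis using m nK by simp
    next
      case False2: False
      have "p < 2*k" "q < 2*k" using c1 c2 False False2 m by auto
      then have "p \<le> 2*m+3" "q \<le> 2*m+3" using m by auto
      then have "p*q \<le> (2*m+3)*(2*m+3)" by (intro mult_mono) auto
      also have "\<dots> < (m+1)*(10*m+17)" by (simp add: algebra_simps)
      also have "\<dots> \<le> ?K*(10*m+17+d)" by (intro mult_left_mono) auto
      also have "\<dots> = ?K*(n-?K)" using d by simp
      finally show ?thesis using pq' by simp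
    qed
  qed
qed

lemma kab_of_partition:
  fixes E :: "'a::finite \<Rightarrow> 'a \<Rightarrow> bool" and A :: "'a set"
  assumes ca: "card A = a" and cb: "card (- A) = b"
    and e: "\<And>u v. E u v \<longleftrightarrow> (u \<in> A) \<noteq> (v \<in> A)"
  shows "is_Kab E a b"
proof -
  obtain g where g: "bij_betw g A {0..<a}" using ex_bij_betw_finite_nat[of A] ca by auto
  obtain h where h: "bij_betw h (- A) {0..<b}" using ex_bij_betw_finite_nat[of "- A"] cb by auto
  define F where "F u = (if u \<in> A then g u else a + h u)" for u
  have F1: "bij_betw F A {0..<a}"
    using g by (rule bij_betw_cong[THEN iffD1, rotated]) (simp add: F_def)
  have sh: "bij_betw (\<lambda>x. a + x) {0..<b} {a..<a+b}"
  proof -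
    have "inj_on (\<lambda>x. a + x) {0..<b}" by (simp add: inj_on_def)
    moreover have "(\<lambda>x. a + x) ` {0..<b} = {a..<a+b}"
    proof
      show "(\<lambda>x. a + x) ` {0..<b} \<subseteq> {a..<a+b}" by auto
      show "{a..<a+b} \<subseteq> (\<lambda>x. a + x) ` {0..<b}"
      proof
        fix y assume "y \<in> {a..<a+b}"
        then have "y = a + (y - a)" "y - a \<in> {0..<b}" by auto
        then show "y \<in> (\<lambda>x. a + x) ` {0..<b}" by blast
      qed
    qed
    ultimately show ?thesis by (simp add: bij_betw_def)
  qed
  have F2: "bij_betw F (- A) {a..<a+b}"
  proof -
    have "bij_betw ((\<lambda>x. a + x) \<circ> h) (- A) {a..<a+b}" by (rule bij_betw_trans[OF h sh])
    then show ?thesis by (rule bij_betw_cong[THEN iffD1, rotated]) (simp add: F_def)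
  qed
  have "bij_betw F (A \<union> - A) ({0..<a} \<union> {a..<a+b})"
    by (rule bij_betw_combine[OF F1 F2]) auto
  moreover have "A \<union> - A = UNIV" by auto
  moreover have "{0..<a} \<union> {a..<a+b} = {0..<a+b}" by auto
  ultimately have bij: "bij_betw F UNIV {0..<a+b}" by simp
  have lt: "F u < a \<longleftrightarrow> u \<in> A" for u
  proof (cases "u \<in> A")
    case True then show ?thesis using bij_betwE[OF F1] by auto
  next
    case False then show ?thesis unfolding F_def by auto
  qed
  have rng: "F u < a + b" for u using bij_betwE[OF bij] by auto
  have "E x y \<longleftrightarrow> Kab_edge a b (F x) (F y)" for x y
    unfolding Kab_edge_def e using lt rng by simp
  then show ?thesis unfolding is_Kab_def using bij by blast
qed

lemma partition_of_kab:
  fixes E :: "'a::finite \<Rightarrow> 'a \<Rightarrow> bool"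
  assumes "is_Kab E a b"
  shows "\<exists>A. card A = a \<and> card (- A) = b \<and> (\<forall>u v. E u v \<longleftrightarrow> (u \<in> A) \<noteq> (v \<in> A))"
proof -
  obtain F where bij: "bij_betw F (UNIV::'a set) {0..<a+b}" and e: "\<forall>x y. E x y \<longleftrightarrow> Kab_edge a b (F x) (F y)"
    using assms unfolding is_Kab_def by blast
  define A where "A = {u. F u < a}"
  have rng: "F u < a + b" for u using bij_betwE[OF bij] by auto
  have inj: "inj F" using bij by (simp add: bij_betw_def)
  have img: "F ` UNIV = {0..<a+b}" using bij by (simp add: bij_betw_def)
  have "F ` A = {0..<a}"
  proof
    show "F ` A \<subseteq> {0..<a}" unfolding A_def by auto
    show "{0..<a} \<subseteq> F ` A"
    proof
      fix i assume i: "i \<in> {0..<a}"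
      then have "i \<in> F ` UNIV" using img by auto
      then obtain u where "i = F u" by auto
      then show "i \<in> F ` A" using i unfolding A_def by auto
    qed
  qed
  then have ca: "card A = a" using card_image[OF inj_on_subset[OF inj]] by (metis card_atLeastLessThan diff_zero subset_UNIV)
  have "F ` (- A) = {a..<a+b}"
  proof
    show "F ` (- A) \<subseteq> {a..<a+b}" unfolding A_def using rng by auto
    show "{a..<a+b} \<subseteq> F ` (- A)"
    proof
      fix i assume i: "i \<in> {a..<a+b}"
      then have "i \<in> F ` UNIV" using img by auto
      then obtain u where "i = F u" by auto
      then show "i \<in> F ` (- A)" using i unfolding A_def by auto
    qed
  qed
  then have cb: "card (- A) = b" using card_image[OF inj_on_subset[OF inj]] by (metis card_atLeastLessThan add_diff_cancel_left' subset_UNIV)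
  have "E u v \<longleftrightarrow> (u \<in> A) \<noteq> (v \<in> A)" for u v
    using e rng unfolding Kab_edge_def A_def by auto
  then show ?thesis using ca cb by blast
qed

lemma sum_ind_const:
  fixes S :: "'a::finite set" and c :: real
  shows "(\<Sum>v\<in>UNIV. if v \<in> S then c else 0) = real (card S) * c"
proof -
  have "(\<Sum>v\<in>UNIV. if v \<in> S then c else 0) = sum (\<lambda>_. c) (UNIV \<inter> S)"
    by (rule sum.inter_restrict[symmetric]) simp
  then show ?thesis by simp
qed

lemma part_eig:
  fixes E :: "'a::finite \<Rightarrow> 'a \<Rightarrow> bool" and A :: "'a set"
  assumes ca: "card A = a" and cb: "card (- A) = b" and ap: "a > 0" and bp: "b > 0"
    and e: "\<And>u v. E u v \<longleftrightarrow> (u \<in> A) \<noteq> (v \<in> A)"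
  shows "is_eigenvalue (adj_matrix E) (- sqrt (real (a*b)))"
proof -
  define x :: "real^'a" where "x = (\<chi> u. if u \<in> A then sqrt (real b) else - sqrt (real a))"
  have sa: "sqrt (real a) > 0" "sqrt (real b) > 0" using ap bp by auto
  have "(adj_matrix E *v x) $ u = (- sqrt (real (a*b))) * x $ u" for u
  proof -
    have "(adj_matrix E *v x) $ u = (\<Sum>v\<in>UNIV. (if E u v then 1 else 0) * x $ v)"
      by (simp add: matrix_vector_mult_def adj_matrix_def)
    also have "\<dots> = (if u \<in> A then - (real b * sqrt (real a)) else real a * sqrt (real b))"
    proof (cases "u \<in> A")
      case True
      have "(\<Sum>v\<in>UNIV. (if E u v then 1 else 0) * x $ v) = (\<Sum>v\<in>UNIV. if v \<in> - A then - sqrt (real a) else 0)"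
        by (rule sum.cong) (auto simp: e True x_def)
      also have "\<dots> = - (real b * sqrt (real a))" using sum_ind_const[of "- A" "- sqrt (real a)"] cb by simp
      finally show ?thesis using True by simp
    next
      case False
      have "(\<Sum>v\<in>UNIV. (if E u v then 1 else 0) * x $ v) = (\<Sum>v\<in>UNIV. if v \<in> A then sqrt (real b) else 0)"
        by (rule sum.cong) (auto simp: e False x_def)
      also have "\<dots> = real a * sqrt (real b)" using sum_ind_const[of A "sqrt (real b)"] ca by simp
      finally show ?thesis using False by simp
    qed
    also have "\<dots> = (- sqrt (real (a*b))) * x $ u"
    proof -
      have sq: "sqrt (real (a*b)) = sqrt (real a) * sqrt (real b)" by (simp add: real_sqrt_mult)
      have "sqrt (real a) * sqrt (real a) = real a" "sqrt (real b) * sqrt (real b) = real b" by simp_all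
      then show ?thesis unfolding sq x_def by (auto simp: algebra_simps)
    qed
    finally show ?thesis .
  qed
  then have "adj_matrix E *v x = (- sqrt (real (a*b))) *\<^sub>R x" by (simp add: vec_eq_iff)
  moreover have "x \<noteq> 0"
  proof
    assume "x = 0"
    obtain u :: 'a where True by simp
    have "x $ u \<noteq> 0" unfolding x_def using sa by auto
    then show False using \<open>x = 0\<close> by simp
  qed
  ultimately show ?thesis unfolding is_eigenvalue_def by blast
qed

lemma kP3_complete:
  fixes E :: "'a::finite \<Rightarrow> 'a \<Rightarrow> bool"
  assumes AB: "A \<inter> B = {}" and cA: "card A \<ge> k" and cB: "card B \<ge> 2*k"
    and e: "\<forall>a\<in>A. \<forall>b\<in>B. E a b \<and> E b a"
  shows "contains_kP3 E k"
proof -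
  obtain c where c: "c ` {0..<k} \<subseteq> A" "inj_on c {0..<k}"
    using card_le_inj[of "{0..<k}" A] cA by auto
  obtain l where l: "l ` {0..<2*k} \<subseteq> B" "inj_on l {0..<2*k}"
    using card_le_inj[of "{0..<2*k}" B] cB by auto
  define f where "f p = (if snd p = 1 then c (fst p) else l (2 * fst p + snd p div 2))" for p :: "nat \<times> nat"
  have cA': "c i \<in> A" if "i < k" for i using c(1) that by auto
  have lB': "l j \<in> B" if "j < 2*k" for j using l(1) that by auto
  have inj: "inj_on f ({0..<k} \<times> {0..<3})"
  proof (rule inj_onI)
    fix p q assume p: "p \<in> {0..<k} \<times> {0..<3}" and q: "q \<in> {0..<k} \<times> {0..<3}" and fe: "f p = f q"
    obtain i e where pe: "p = (i,e)" by (cases p)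
    obtain i' e' where qe: "q = (i',e')" by (cases q)
    have ie: "i < k" "e < 3" "i' < k" "e' < 3" using p q pe qe by auto
    have lidx: "2*i + e div 2 < 2*k" "2*i' + e' div 2 < 2*k" using ie by auto
    show "p = q"
    proof (cases "e = 1")
      case True
      show ?thesis
      proof (cases "e' = 1")
        case True2: True
        then have "c i = c i'" using fe pe qe True by (simp add: f_def)
        then have "i = i'" using inj_onD[OF c(2)] ie by auto
        then show ?thesis using pe qe True True2 by simp
      next
        case False
        then have "c i = l (2*i' + e' div 2)" using fe pe qe True by (simp add: f_def)
        then show ?thesis using cA'[OF ie(1)] lB'[OF lidx(2)] AB by auto
      qed
    next
      case False
      show ?thesis
      proof (cases "e' = 1")
        case True2: True
        then have "l (2*i + e div 2) = c i'" using fe pe qe False by (simp add: f_def)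
        then show ?thesis using cA'[OF ie(3)] lB'[OF lidx(1)] AB by auto
      next
        case False2: False
        then have "l (2*i + e div 2) = l (2*i' + e' div 2)" using fe pe qe False by (simp add: f_def)
        then have eq: "2*i + e div 2 = 2*i' + e' div 2" using inj_onD[OF l(2)] lidx by auto
        have "e = 0 \<or> e = 2" "e' = 0 \<or> e' = 2" using ie False False2 by auto
        then have "i = i' \<and> e = e'" using eq by presburger
        then show ?thesis using pe qe by simp
      qed
    qed
  qed
  have edges: "\<forall>i<k. E (f (i,0)) (f (i,1)) \<and> E (f (i,1)) (f (i,2))"
  proof (intro allI impI)
    fix i assume i: "i < k"
    have "f (i,0) = l (2*i)" "f (i,1) = c i" "f (i,2) = l (2*i+1)" by (simp_all add: f_def)
    moreover have "2*i < 2*k" "2*i+1 < 2*k" using i by auto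
    ultimately show "E (f (i,0)) (f (i,1)) \<and> E (f (i,1)) (f (i,2))"
      using e cA'[OF i] lB' by auto
  qed
  show ?thesis unfolding contains_kP3_def using inj edges by blast
qed


definition qf :: "('a::finite \<Rightarrow> 'a \<Rightarrow> bool) \<Rightarrow> ('a \<Rightarrow> real) \<Rightarrow> real" where
  "qf E f = (\<Sum>i\<in>UNIV. \<Sum>j\<in>UNIV. if E i j then f i * f j else 0)"

lemma key:
  fixes E :: "'a::finite \<Rightarrow> 'a \<Rightarrow> bool" and f :: "'a \<Rightarrow> real"
  assumes sg: "simple_graph E" and k2: "k \<ge> 2" and n: "CARD('a) \<ge> 11*k-4"
    and nk: "\<not> contains_kP3 E k"
  shows "- sqrt (real ((k-1)*(CARD('a)-k+1))) * (\<Sum>i\<in>UNIV. (f i)^2) \<le> qf E f"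
    and "qf E f = - sqrt (real ((k-1)*(CARD('a)-k+1))) * (\<Sum>i\<in>UNIV. (f i)^2) \<Longrightarrow> (\<exists>i. f i \<noteq> 0)
         \<Longrightarrow> is_Kab E (k-1) (CARD('a)-k+1)"
proof -
  let ?n = "CARD('a)"
  define s where "s = sqrt (real ((k-1)*(?n-k+1)))"
  define T where "T = (\<Sum>i\<in>UNIV. (f i)^2)"
  have sym: "\<And>u v. E u v \<Longrightarrow> E v u" and irr: "\<And>u. \<not> E u u"
    using sg unfolding simple_graph_def by auto
  define P where "P = {i. f i > 0}"
  define N where "N = {i. f i < 0}"
  have PN: "P \<inter> N = {}" unfolding P_def N_def by auto
  define Eb where "Eb = {(u,w). u \<in> P \<and> w \<in> N \<and> E u w}"
  define Eb' where "Eb' = {(w,u). u \<in> P \<and> w \<in> N \<and> E u w}"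
  define H where "H u w = (E u w \<and> ((u \<in> P \<and> w \<in> N) \<or> (u \<in> N \<and> w \<in> P)))" for u w
  have bgH: "bg P H" unfolding bg_def H_def using sym irr PN by blast
  have nopk: "\<not>(\<exists>g. pk UNIV H k g)"
  proof
    assume "\<exists>g. pk UNIV H k g"
    then have "contains_kP3 E k" unfolding pk_def contains_kP3_def H_def by blast
    then show False using nk by simp
  qed
  have ecEb: "ec UNIV P H = card Eb"
  proof -
    have "{(u,w). u \<in> UNIV \<and> u \<in> P \<and> w \<in> UNIV \<and> w \<notin> P \<and> H u w} = Eb"
      unfolding Eb_def H_def using PN by blast
    then show ?thesis unfolding ec_def by simp
  qed
  define m where "m = card Eb"
  have mb: "m \<le> (k-1)*(?n-k+1)"
    using bip_bound[OF k2 _ _ bgH nopk] n ecEb unfolding m_def by simp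
  have s2: "s^2 = real ((k-1)*(?n-k+1))" unfolding s_def by simp
  have s0: "s \<ge> 0" unfolding s_def by simp
  have ms: "real m \<le> s^2" unfolding s2 using mb by (simp only: of_nat_le_iff)
  define g where "g = (\<lambda>(i,j). if E i j then f i * f j else (0::real))"
  have q1: "qf E f = sum g UNIV"
  proof -
    have "qf E f = sum g (UNIV \<times> UNIV)" unfolding qf_def g_def by (simp add: sum.cartesian_product)
    then show ?thesis by simp
  qed
  have fEb: "finite Eb" "finite Eb'" by simp_all
  have EbPN: "Eb \<subseteq> P \<times> N" unfolding Eb_def by auto
  have Eb'NP: "Eb' \<subseteq> N \<times> P" unfolding Eb'_def by auto
  have disj: "Eb \<inter> Eb' = {}" using EbPN Eb'NP PN by blast
  define Rest where "Rest = UNIV - (Eb \<union> Eb')"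
  have q2: "sum g UNIV = sum g Rest + (sum g Eb + sum g Eb')"
  proof -
    have "sum g UNIV = sum g (UNIV - (Eb \<union> Eb')) + sum g (Eb \<union> Eb')"
      by (rule sum.subset_diff) simp_all
    also have "sum g (Eb \<union> Eb') = sum g Eb + sum g Eb'"
      by (rule sum.union_disjoint) (use disj in simp_all)
    finally show ?thesis unfolding Rest_def .
  qed
  have sw: "sum g Eb' = sum g Eb"
  proof -
    have "Eb' = prod.swap ` Eb" unfolding Eb_def Eb'_def by auto
    then have "sum g Eb' = sum (g \<circ> prod.swap) Eb" by (simp add: sum.reindex)
    also have "\<dots> = sum g Eb"
      by (rule sum.cong) (auto simp: g_def dest: sym simp: mult.commute)
    finally show ?thesis .
  qed
  define V0 where "V0 = (\<Sum>p\<in>Eb. (case p of (u,w) \<Rightarrow> f u * (- f w)))"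
  have gEb: "sum g Eb = - V0"
  proof -
    have "sum g Eb = (\<Sum>p\<in>Eb. - (case p of (u,w) \<Rightarrow> f u * (- f w)))"
      by (rule sum.cong) (auto simp: g_def Eb_def)
    then show ?thesis unfolding V0_def by (simp add: sum_negf)
  qed
  define R0 where "R0 = sum g Rest"
  have gRest: "g p \<ge> 0" if "p \<in> Rest" for p
  proof -
    obtain i j where p: "p = (i,j)" by (cases p)
    show ?thesis
    proof (cases "E i j")
      case False then show ?thesis using p by (simp add: g_def)
    next
      case True
      have n1: "\<not>(i \<in> P \<and> j \<in> N)" using that p True unfolding Rest_def Eb_def by auto
      have n2: "\<not>(i \<in> N \<and> j \<in> P)" using that p True sym unfolding Rest_def Eb'_def by auto
      have "f i * f j \<ge> 0"
      proof (cases "f i > 0")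
        case True
        then have "f j \<ge> 0" using n1 unfolding P_def N_def by auto
        then show ?thesis using True by simp
      next
        case False
        show ?thesis
        proof (cases "f i < 0")
          case True
          then have "f j \<le> 0" using n2 unfolding P_def N_def by auto
          then show ?thesis using True by (simp add: mult_nonpos_nonpos)
        next
          case False2: False
          then have "f i = 0" using False by simp
          then show ?thesis by simp
        qed
      qed
      then show ?thesis using p True by (simp add: g_def)
    qed
  qed
  have R0: "R0 \<ge> 0" unfolding R0_def using gRest by (simp add: sum_nonneg)
  have qeq: "qf E f = R0 - 2 * V0" using q1 q2 sw gEb unfolding R0_def by simp
  have V0pos: "(case p of (u,w) \<Rightarrow> f u * (- f w)) > 0" if "p \<in> Eb" for p
    using that unfolding Eb_def P_def N_def by (auto simp: mult_pos_neg)
  have V0nn: "V0 \<ge> 0" unfolding V0_def using V0pos by (simp add: sum_nonneg less_imp_le)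
  define h where "h = (\<lambda>(u,w). (f u)^2 * (f w)^2)"
  define C where "C = sum h Eb"
  define A where "A = (\<Sum>u\<in>P. (f u)^2)"
  define B where "B = (\<Sum>w\<in>N. (f w)^2)"
  have CS: "V0^2 \<le> real m * C"
  proof -
    have "V0^2 = (\<Sum>p\<in>Eb. 1 * (case p of (u,w) \<Rightarrow> f u * (- f w)))^2" unfolding V0_def by simp
    also have "\<dots> \<le> (\<Sum>p\<in>Eb. 1^2) * (\<Sum>p\<in>Eb. (case p of (u,w) \<Rightarrow> f u * (- f w))^2)"
      by (rule Cauchy_Schwarz_ineq_sum)
    also have "(\<Sum>p\<in>Eb. (case p of (u,w) \<Rightarrow> f u * (- f w))^2) = C"
      unfolding C_def h_def by (rule sum.cong) (auto simp: power_mult_distrib)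
    finally show ?thesis unfolding m_def by simp
  qed
  have hPN: "sum h (P \<times> N) = A * B"
    unfolding A_def B_def h_def by (simp add: sum_product sum.cartesian_product)
  have hpos: "h p > 0" if "p \<in> P \<times> N" for p
    using that unfolding h_def P_def N_def by auto
  have CAB: "C \<le> A * B"
  proof -
    have "C \<le> sum h (P \<times> N)" unfolding C_def
      by (rule sum_mono2) (use EbPN hpos in \<open>auto intro: less_imp_le\<close>)
    then show ?thesis using hPN by simp
  qed
  have TAB: "T = A + B"
  proof -
    have z: "\<forall>i\<in>UNIV - (P \<union> N). (f i)^2 = 0"
    proof
      fix i assume "i \<in> UNIV - (P \<union> N)"
      then have "\<not> f i > 0" "\<not> f i < 0" unfolding P_def N_def by auto
      then have "f i = 0" by linarith
      then show "(f i)^2 = 0" by simp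
    qed
    have "T = (\<Sum>i\<in>P \<union> N. (f i)^2)" unfolding T_def
      by (rule sum.mono_neutral_right) (use z in simp_all)
    also have "\<dots> = A + B" unfolding A_def B_def by (rule sum.union_disjoint) (use PN in simp_all)
    finally show ?thesis .
  qed
  have A0: "A \<ge> 0" "B \<ge> 0" unfolding A_def B_def by (simp_all add: sum_nonneg)
  have AMGM: "4 * (A * B) \<le> T^2"
  proof -
    have "0 \<le> (A-B)^2" by simp
    moreover have "(A+B)^2 = A^2 + B^2 + 2*A*B" by (simp add: power2_eq_square algebra_simps)
    moreover have "(A-B)^2 = A^2 + B^2 - 2*A*B" by (rule power2_diff)
    ultimately show ?thesis unfolding TAB by linarith
  qed
  have m0: "real m \<ge> 0" by simp
  have c1: "(2*V0)^2 \<le> 4 * (real m * C)"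
  proof -
    have "(2*V0)^2 = 4 * V0^2" by (simp add: power_mult_distrib)
    then show ?thesis using CS by linarith
  qed
  have c2: "real m * C \<le> real m * (A * B)" by (rule mult_left_mono[OF CAB m0])
  have c3: "real m * (4 * (A * B)) \<le> real m * T^2" by (rule mult_left_mono[OF AMGM m0])
  have T2: "T^2 \<ge> 0" by simp
  have c4: "real m * T^2 \<le> s^2 * T^2" by (rule mult_right_mono[OF ms T2])
  have c5: "s^2 * T^2 = (s*T)^2" by (simp add: power_mult_distrib)
  have chain: "(2*V0)^2 \<le> (s*T)^2"
  proof -
    note c1
    also have "4 * (real m * C) \<le> 4 * (real m * (A * B))" using c2 by simp
    also have "4 * (real m * (A * B)) = real m * (4 * (A * B))" by (simp only: mult.left_commute)
    also note c3
    also note c4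
    also note c5
    finally show ?thesis .
  qed
  have T0: "T \<ge> 0" unfolding T_def by (simp add: sum_nonneg)
  have sT0: "s*T \<ge> 0" using s0 T0 by simp
  have VsT: "2*V0 \<le> s*T" by (rule power2_le_imp_le[OF chain sT0])
  show "- sqrt (real ((k-1)*(CARD('a)-k+1))) * (\<Sum>i\<in>UNIV. (f i)^2) \<le> qf E f"
    using qeq R0 VsT unfolding s_def T_def by simp
  show "is_Kab E (k-1) (CARD('a)-k+1)"
    if eq0: "qf E f = - sqrt (real ((k-1)*(CARD('a)-k+1))) * (\<Sum>i\<in>UNIV. (f i)^2)"
    and nz: "\<exists>i. f i \<noteq> 0"
  proof -
    have eq: "qf E f = - s * T" using eq0 unfolding s_def T_def .
    obtain i0 where i0: "f i0 \<noteq> 0" using nz by blast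
    have Tpos: "T > 0" unfolding T_def
      by (rule sum_pos2[of UNIV i0]) (use i0 in auto)
    have R00: "R0 = 0" and V2: "2*V0 = s*T" using qeq eq R0 VsT by linarith+
    have k1: "k - 1 \<ge> 1" using k2 by simp
    have nk1: "?n - k + 1 \<ge> 1" by simp
    have "(k-1)*(?n-k+1) \<ge> 1" using mult_le_mono[OF k1 nk1] by simp
    then have "(k-1)*(?n-k+1) > 0" by simp
    then have "real ((k-1)*(?n-k+1)) > 0" by (simp only: of_nat_0_less_iff)
    then have s2pos: "s^2 > 0" unfolding s2 .
    have eqs: "(2*V0)^2 = (s*T)^2" using V2 by simp
    have T2pos: "T^2 > 0" using Tpos by simp
    have i1: "4 * (real m * C) \<le> 4 * (real m * (A * B))" using c2 by simp
    have i2: "4 * (real m * (A * B)) = real m * (4 * (A * B))" by (simp only: mult.left_commute)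
    have mT: "real m * T^2 = s^2 * T^2" using c1 i1 i2 c3 c4 c5 eqs by linarith
    then have ms2: "real m = s^2" using T2pos by simp
    then have mval: "m = (k-1)*(?n-k+1)" unfolding s2 by (simp only: of_nat_eq_iff)
    have mpos: "real m > 0" using ms2 s2pos by simp
    have "real m * C = real m * (A * B)" using c1 i1 i2 c3 c4 c5 eqs mT by linarith
    then have CeqAB: "C = A * B" using mpos by simp
    have EbFull: "Eb = P \<times> N"
    proof -
      have "sum h (P \<times> N) = sum h (P \<times> N - Eb) + sum h Eb"
        by (rule sum.subset_diff[OF EbPN]) simp
      then have z: "sum h (P \<times> N - Eb) = 0" using CeqAB hPN unfolding C_def by simp
      have "\<forall>p\<in>P \<times> N - Eb. h p = 0"
        using z sum_nonneg_eq_0_iff[of "P \<times> N - Eb" h] hpos by (simp add: less_imp_le)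
      then have "P \<times> N - Eb = {}" using hpos by fastforce
      then show ?thesis using EbPN by blast
    qed
    have RestZ: "\<forall>p\<in>Rest. g p = 0"
      using R00 sum_nonneg_eq_0_iff[of Rest g] gRest unfolding R0_def by simp
    have cPN: "card P * card N = (k-1)*(?n-k+1)"
      using mval EbFull unfolding m_def by (simp add: card_cartesian_product)
    have pn: "card P + card N \<le> ?n"
    proof -
      have "card (P \<union> N) = card P + card N" by (rule card_Un_disjoint) (use PN in simp_all)
      moreover have "card (P \<union> N) \<le> ?n" by (rule card_mono) simp_all
      ultimately show ?thesis by simp
    qed
    have cross: "\<forall>a\<in>P. \<forall>b\<in>N. E a b \<and> E b a" using EbFull sym unfolding Eb_def by blast
    have nc1: "\<not>(card P \<ge> k \<and> card N \<ge> 2*k)"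
      using kP3_complete[OF PN _ _ cross] nk by blast
    have NP: "N \<inter> P = {}" using PN by blast
    have cross2: "\<forall>a\<in>N. \<forall>b\<in>P. E a b \<and> E b a" using cross by blast
    have nc2: "\<not>(card N \<ge> k \<and> card P \<ge> 2*k)"
      using kP3_complete[OF NP _ _ cross2] nk by blast
    have cases: "(card P = k-1 \<and> card N = ?n-k+1) \<or> (card N = k-1 \<and> card P = ?n-k+1)"
      by (rule arith_eq[OF k2 n cPN pn nc1 nc2])
    have cardU: "card P + card N = ?n" using cases k2 n by auto
    have UPN: "P \<union> N = UNIV"
    proof -
      have "card (P \<union> N) = card P + card N" by (rule card_Un_disjoint) (use PN in simp_all)
      then have "card (UNIV::'a set) \<le> card (P \<union> N)" using cardU by simp
      then show ?thesis using card_seteq[of UNIV "P \<union> N"] by simp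
    qed
    have compP: "- P = N" using UPN PN by blast
    have edge: "E u v \<longleftrightarrow> (u \<in> P) \<noteq> (v \<in> P)" for u v
    proof
      assume e: "E u v"
      show "(u \<in> P) \<noteq> (v \<in> P)"
      proof
        assume same: "(u \<in> P) = (v \<in> P)"
        have notEb: "(u,v) \<notin> Eb \<union> Eb'" using same PN unfolding Eb_def Eb'_def by blast
        then have "(u,v) \<in> Rest" unfolding Rest_def by simp
        then have "g (u,v) = 0" using RestZ by blast
        then have z: "f u * f v = 0" using e by (simp add: g_def)
        show False
        proof (cases "u \<in> P")
          case True
          then have "f u > 0" "f v > 0" using same unfolding P_def by auto
          then show False using z by simp
        next
          case False
          then have "u \<in> N" "v \<in> N" using same UPN by auto
          then have "f u < 0" "f v < 0" unfolding N_def by auto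
          then have "f u * f v > 0" by (simp add: mult_neg_neg)
          then show False using z by simp
        qed
      qed
    next
      assume d: "(u \<in> P) \<noteq> (v \<in> P)"
      show "E u v"
      proof (cases "u \<in> P")
        case True
        then have "v \<in> N" using d UPN by auto
        then show ?thesis using cross True by blast
      next
        case False
        then have "u \<in> N" "v \<in> P" using d UPN by auto
        then show ?thesis using cross by blast
      qed
    qed
    show ?thesis
    proof (cases "card P = k-1 \<and> card N = ?n-k+1")
      case True
      have "card (- P) = ?n-k+1" using True compP by simp
      then show ?thesis using kab_of_partition[of P "k-1" "?n-k+1" E] True edge by blast
    next
      case False
      then have cN: "card N = k-1" "card P = ?n-k+1" using cases by auto
      have compN: "- N = P" using compP by blast
      have "card (- N) = ?n-k+1" using cN compN by simp
      moreover have "E u v \<longleftrightarrow> (u \<in> N) \<noteq> (v \<in> N)" for u v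
        using edge[of u v] compP by blast
      ultimately show ?thesis using kab_of_partition[of N "k-1" "?n-k+1" E] cN by blast
    qed
  qed
qed

lemma adj_symm: "simple_graph E \<Longrightarrow> symm (adj_matrix E)"
  unfolding symm_def adj_matrix_def simple_graph_def by auto

lemma qf_adj: "v \<bullet> (adj_matrix E *v v) = qf E (\<lambda>i. v $ i)"
proof -
  have "v \<bullet> (adj_matrix E *v v) = (\<Sum>i\<in>UNIV. v $ i * (\<Sum>j\<in>UNIV. (if E i j then 1 else 0) * v $ j))"
    unfolding inner_vec_def matrix_vector_mult_def adj_matrix_def by simp
  also have "\<dots> = (\<Sum>i\<in>UNIV. \<Sum>j\<in>UNIV. v $ i * ((if E i j then 1 else 0) * v $ j))"
    by (simp only: sum_distrib_left)
  also have "\<dots> = qf E (\<lambda>i. v $ i)" unfolding qf_def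
    by (intro sum.cong refl) simp
  finally show ?thesis .
qed

lemma inner_sq: "v \<bullet> v = (\<Sum>i\<in>UNIV. (v $ i)^2)"
  unfolding inner_vec_def by (simp add: power2_eq_square)

lemma eigv_lemma:
  fixes E :: "'a::finite \<Rightarrow> 'a \<Rightarrow> bool"
  assumes "is_eigenvalue (adj_matrix E) \<mu>"
  shows "\<exists>v::real^'a. v \<noteq> 0 \<and> qf E (\<lambda>i. v $ i) = \<mu> * (\<Sum>i\<in>UNIV. (v $ i)^2)"
proof -
  obtain v where v: "v \<noteq> 0" "adj_matrix E *v v = \<mu> *\<^sub>R v" using assms unfolding is_eigenvalue_def by blast
  have "qf E (\<lambda>i. v $ i) = v \<bullet> (adj_matrix E *v v)" by (rule qf_adj[symmetric])
  also have "\<dots> = v \<bullet> (\<mu> *\<^sub>R v)" by (simp only: v(2))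
  also have "\<dots> = \<mu> * (v \<bullet> v)" by (rule inner_scaleR_right)
  also have "\<dots> = \<mu> * (\<Sum>i\<in>UNIV. (v $ i)^2)" by (simp only: inner_sq)
  finally have "qf E (\<lambda>i. v $ i) = \<mu> * (\<Sum>i\<in>UNIV. (v $ i)^2)" .
  with v(1) show ?thesis by blast
qed

lemma tpos_lemma: "(v::real^'a::finite) \<noteq> 0 \<Longrightarrow> (\<Sum>i\<in>UNIV. (v $ i)^2) > 0"
proof -
  assume "v \<noteq> 0"
  then have "0 < v \<bullet> v" by simp
  then show ?thesis by (simp only: inner_sq)
qed

lemma lb_lemma:
  fixes E :: "'a::finite \<Rightarrow> 'a \<Rightarrow> bool"
  assumes sg: "simple_graph E" and k2: "k \<ge> 2" and n: "CARD('a) \<ge> 11 * k - 4"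
    and nk: "\<not> contains_kP3 E k" and ev: "is_eigenvalue (adj_matrix E) \<mu>"
  shows "- sqrt (real ((k - 1) * (CARD('a) - k + 1))) \<le> \<mu>"
proof -
  obtain v :: "real^'a" where v: "v \<noteq> 0" "qf E (\<lambda>i. v $ i) = \<mu> * (\<Sum>i\<in>UNIV. (v $ i)^2)"
    using eigv_lemma[OF ev] by blast
  have k1: "- sqrt (real ((k - 1) * (CARD('a) - k + 1))) * (\<Sum>i\<in>UNIV. (v $ i)^2) \<le> qf E (\<lambda>i. v $ i)"
    by (rule key(1)[OF sg k2 n nk])
  have "- sqrt (real ((k - 1) * (CARD('a) - k + 1))) * (\<Sum>i\<in>UNIV. (v $ i)^2) \<le> \<mu> * (\<Sum>i\<in>UNIV. (v $ i)^2)"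
    using k1 v(2) by linarith
  then show ?thesis by (rule mult_right_le_imp_le[OF _ tpos_lemma[OF v(1)]])
qed

lemma eq_lemma:
  fixes E :: "'a::finite \<Rightarrow> 'a \<Rightarrow> bool"
  assumes sg: "simple_graph E" and k2: "k \<ge> 2" and n: "CARD('a) \<ge> 11 * k - 4"
    and nk: "\<not> contains_kP3 E k"
    and ev: "is_eigenvalue (adj_matrix E) (- sqrt (real ((k - 1) * (CARD('a) - k + 1))))"
  shows "is_Kab E (k - 1) (CARD('a) - k + 1)"
proof -
  obtain v :: "real^'a" where v: "v \<noteq> 0"
    "qf E (\<lambda>i. v $ i) = - sqrt (real ((k - 1) * (CARD('a) - k + 1))) * (\<Sum>i\<in>UNIV. (v $ i)^2)"
    using eigv_lemma[OF ev] by blast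
  have nz: "\<exists>i. v $ i \<noteq> 0"
  proof (rule ccontr)
    assume "\<not> (\<exists>i. v $ i \<noteq> 0)"
    then have "v = 0" by (simp add: vec_eq_iff)
    then show False using v(1) by simp
  qed
  show ?thesis by (rule key(2)[OF sg k2 n nk v(2) nz])
qed

lemma kab_eig:
  fixes E :: "'a::finite \<Rightarrow> 'a \<Rightarrow> bool"
  assumes k2: "k \<ge> 2" and n: "CARD('a) \<ge> 11 * k - 4" and K: "is_Kab E (k - 1) (CARD('a) - k + 1)"
  shows "is_eigenvalue (adj_matrix E) (- sqrt (real ((k - 1) * (CARD('a) - k + 1))))"
proof -
  obtain A where A: "card A = k - 1" "card (- A) = CARD('a) - k + 1"
    "\<forall>u v. E u v \<longleftrightarrow> (u \<in> A) \<noteq> (v \<in> A)" using partition_of_kab[OF K] by blast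
  show ?thesis by (rule part_eig[OF A(1) A(2)]) (use k2 A(3) in auto)
qed

theorem mainTheorem4:
  fixes E :: "'a::finite \<Rightarrow> 'a \<Rightarrow> bool" and k :: nat
  assumes "simple_graph E"
    and "k \<ge> 2"
    and "CARD('a) \<ge> 11 * k - 4"
    and "\<not> contains_kP3 E k"
  shows "least_eig E \<ge> - sqrt (real ((k - 1) * (CARD('a) - k + 1)))
    \<and> (least_eig E = - sqrt (real ((k - 1) * (CARD('a) - k + 1)))
         \<longleftrightarrow> is_Kab E (k - 1) (CARD('a) - k + 1))"
proof -
  note sg = assms(1) and k2 = assms(2) and n = assms(3) and nk = assms(4)
  let ?L = "{\<mu>. is_eigenvalue (adj_matrix E) \<mu>}"
  let ?s = "sqrt (real ((k - 1) * (CARD('a) - k + 1)))"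
  have sy: "symm (adj_matrix E)" using adj_symm[OF sg] .
  have fin: "finite ?L" by (rule eig_finite[OF sy])
  have ne: "?L \<noteq> {}" using eig_exists[OF sy] by blast
  have lb: "\<forall>\<mu>\<in>?L. - ?s \<le> \<mu>" using lb_lemma[OF sg k2 n nk] by blast
  have ge: "- ?s \<le> least_eig E" unfolding least_eig_def using Min_ge_iff[OF fin ne] lb by blast
  have iff: "least_eig E = - ?s \<longleftrightarrow> is_Kab E (k - 1) (CARD('a) - k + 1)"
  proof
    assume eq: "least_eig E = - ?s"
    have "least_eig E \<in> ?L" unfolding least_eig_def by (rule Min_in[OF fin ne])
    then have "is_eigenvalue (adj_matrix E) (- ?s)" unfolding eq by simp
    then show "is_Kab E (k - 1) (CARD('a) - k + 1)" by (rule eq_lemma[OF sg k2 n nk])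
  next
    assume K: "is_Kab E (k - 1) (CARD('a) - k + 1)"
    have "- ?s \<in> ?L" using kab_eig[OF k2 n K] by simp
    then have "least_eig E \<le> - ?s" unfolding least_eig_def using fin by (rule Min_le[rotated])
    then show "least_eig E = - ?s" using ge by simp
  qed
  show ?thesis using ge iff by (rule conjI)
qed

end
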